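(* Greedy Dual is $(2m+1)$-competitive for both MPMD and MBPMD. That is, for every metric space and every instance $\mathcal{I}$ with $2m$ requests, the total cost (connection plus waiting) of the matching produced by Greedy Dual is at most $(2m+1)\cdot\mathrm{Opt}(\mathcal{I})$.
   Context: Problem (MPMD / MBPMD). Let $(\mathcal{X},\mathrm{dist})$ be a metric space. An instance consists of $2m$ requests $u_1,\dots,u_{2m}$. Each request $u$ is a triple $(\mathrm{pos}(u),\mathrm{atime}(u),\mathrm{sgn}(u))$, where $\mathrm{pos}(u)\in\mathcal{X}$ is its location and $\mathrm{atime}(u)\ge0$ is its arrival time, with arrival times nondecreasing. In MPMD, $\mathrm{sgn}(u)=0$ for all requests. In MBPMD, exactly $m$ requests have sign $+1$ and $m$ have sign $-1$. At time $\tau$, an algorithm may match two arrived, unmatched requests $u,v$ with $\mathrm{sgn}(u)=-\mathrm{sgn}(v)$, at cost $\mathrm{dist}(\mathrm{pos}(u),\mathrm{pos}(v))$ (connection cost) plus $(\tau-\mathrm{atime}(u))+(\tau-\mathrm{atime}(v))$ (waiting costs). All requests must eventually be matched. The online algorithm does not know future requests or $m$ in advance. $\mathrm{Opt}(\mathcal{I})$ denotes the minimum total cost of an offline solution that knows the whole input in advance. Notation. Edges are unordered pairs $\{u,v\}$ of distinct requests with $\mathrm{sgn}(u)=-\mathrm{sgn}(v)$. For a set $S$ of requests, $\delta(S)$ is the set of edges with exactly one endpoint in $S$. In MPMD, $\mathrm{sur}(S)=|S|\bmod 2$; in MBPMD, $\mathrm{sur}(S)=|\sum_{u\in S}\mathrm{sgn}(u)|$.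 For an edge $e=(u,v)$, $\mathrm{cost}(e)=\mathrm{dist}(\mathrm{pos}(u),\mathrm{pos}(v))+|\mathrm{atime}(u)-\mathrm{atime}(v)|$. Algorithm Greedy Dual (GD). GD maintains a dual variable $y_S\ge0$ for every set $S$ of already-arrived requests; $y_S(\tau)$ denotes its value at time $\tau$. It also maintains a partition of the arrived requests into active sets, with $\mathcal{A}(u)$ denoting the active set containing $u$. An active set is growing if it contains at least one free request, and non-growing otherwise. - When a request $u$ arrives, $\mathcal{A}(u)\leftarrow\{u\}$ becomes a new active set, and $y_S\leftarrow 0$ for every new set $S$ containing $u$. - Tight-constraint event: while there is an edge $e=(u,v)$ between arrived requests with $\mathcal{A}(u)\neq\mathcal{A}(v)$ and $\sum_{S:\,e\in\delta(S)}y_S=\mathrm{cost}(e)$, GD does the following. It merges the two sets: $S=\mathcal{A}(u)\cup\mathcal{A}(v)$ becomes active and $\mathcal{A}(w)\leftarrow S$ for all $w\in S$, while $\mathcal{A}(u)$ and $\mathcal{A}(v)$ become inactive. It marks the edge $e$. Then, while there are free $u',v'\in S$ with $\mathrm{sgn}(u')=-\mathrm{sgn}(v')$, it matches $u'$ with $v'$ at the current time. - At all other times, $y_S$ increases continuously at rate $1$ (the same rate as time) for every active growing set $S$; all other dual variables stay constant. *)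

theory Defs
  imports "HOL-Analysis.Analysis"
begin

text \<open>Requests are indexed 0..<n (n = 2m), sorted by arrival time.
  An instance is given by pos :: nat => 'a (metric space 'a),
  atime :: nat => real (arrival times) and sg :: nat => int (signs).\<close>

definition mpmd_instance :: "nat \<Rightarrow> (nat \<Rightarrow> real) \<Rightarrow> (nat \<Rightarrow> int) \<Rightarrow> bool" where
  "mpmd_instance m atime sg \<longleftrightarrow>
     (\<forall>u<2*m. 0 \<le> atime u) \<and> (\<forall>i j. i \<le> j \<longrightarrow> j < 2*m \<longrightarrow> atime i \<le> atime j) \<and>
     (\<forall>u<2*m. sg u = 0)"

definition mbpmd_instance :: "nat \<Rightarrow> (nat \<Rightarrow> real) \<Rightarrow> (nat \<Rightarrow> int) \<Rightarrow> bool" where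
  "mbpmd_instance m atime sg \<longleftrightarrow>
     (\<forall>u<2*m. 0 \<le> atime u) \<and> (\<forall>i j. i \<le> j \<longrightarrow> j < 2*m \<longrightarrow> atime i \<le> atime j) \<and>
     (\<forall>u<2*m. sg u = 1 \<or> sg u = -1) \<and>
     card {u. u < 2*m \<and> sg u = 1} = m \<and> card {u. u < 2*m \<and> sg u = -1} = m"

definition matching_cost ::
  "nat \<Rightarrow> (nat \<Rightarrow> 'a::metric_space) \<Rightarrow> (nat \<Rightarrow> real) \<Rightarrow> (nat \<Rightarrow> nat) \<Rightarrow> (nat \<Rightarrow> real) \<Rightarrow> real" where
  "matching_cost n pos atime mate mt =
     (\<Sum>u\<in>{u. u < n \<and> u < mate u}. dist (pos u) (pos (mate u))) + (\<Sum>u<n. mt u - atime u)"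

definition valid_solution ::
  "nat \<Rightarrow> (nat \<Rightarrow> real) \<Rightarrow> (nat \<Rightarrow> int) \<Rightarrow> (nat \<Rightarrow> nat) \<Rightarrow> (nat \<Rightarrow> real) \<Rightarrow> bool" where
  "valid_solution n atime sg mate mt \<longleftrightarrow>
     (\<forall>u<n. mate u < n \<and> mate u \<noteq> u \<and> mate (mate u) = u \<and> sg (mate u) = - sg u \<and>
            mt (mate u) = mt u \<and> atime u \<le> mt u)"

definition Opt :: "nat \<Rightarrow> (nat \<Rightarrow> 'a::metric_space) \<Rightarrow> (nat \<Rightarrow> real) \<Rightarrow> (nat \<Rightarrow> int) \<Rightarrow> real" where
  "Opt n pos atime sg = Inf {matching_cost n pos atime mate mt | mate mt. valid_solution n atime sg mate mt}"

definition ecost :: "(nat \<Rightarrow> 'a::metric_space) \<Rightarrow> (nat \<Rightarrow> real) \<Rightarrow> nat \<Rightarrow> nat \<Rightarrow> real" where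
  "ecost pos atime u v = dist (pos u) (pos v) + \<bar>atime u - atime v\<bar>"

definition dual_sum :: "nat \<Rightarrow> (nat set \<Rightarrow> real) \<Rightarrow> nat \<Rightarrow> nat \<Rightarrow> real" where
  "dual_sum n y u v = (\<Sum>S\<in>{S. S \<subseteq> {..<n} \<and> (u \<in> S) \<noteq> (v \<in> S)}. y S)"

text \<open>State of Greedy Dual: current time, number of arrived requests
  (requests 0..<narr have arrived), the family of active sets, dual variables,
  free requests, and the matching built so far (partner and matching time).\<close>
record gd_state =
  tm :: real
  narr :: nat
  act :: "nat set set"
  yv :: "nat set \<Rightarrow> real"
  fr :: "nat set"
  mate :: "nat \<Rightarrow> nat"
  mtm :: "nat \<Rightarrow> real"

definition gd_init :: gd_state where
  "gd_init = \<lparr>tm = 0, narr = 0, act = {}, yv = (\<lambda>_. 0), fr = {}, mate = id, mtm = (\<lambda>_. 0)\<rparr>"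

definition cross_edge :: "(nat \<Rightarrow> int) \<Rightarrow> gd_state \<Rightarrow> nat \<Rightarrow> nat \<Rightarrow> bool" where
  "cross_edge sg s u v \<longleftrightarrow> u < narr s \<and> v < narr s \<and> u \<noteq> v \<and> sg u = - sg v \<and>
     (\<exists>Su\<in>act s. \<exists>Sv\<in>act s. u \<in> Su \<and> v \<in> Sv \<and> Su \<noteq> Sv)"

definition tight_edge ::
  "nat \<Rightarrow> (nat \<Rightarrow> 'a::metric_space) \<Rightarrow> (nat \<Rightarrow> real) \<Rightarrow> (nat \<Rightarrow> int) \<Rightarrow> gd_state \<Rightarrow> nat \<Rightarrow> nat \<Rightarrow> bool" where
  "tight_edge n pos atime sg s u v \<longleftrightarrow> cross_edge sg s u v \<and> dual_sum n (yv s) u v = ecost pos atime u v"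

definition gd_arrive :: "nat \<Rightarrow> (nat \<Rightarrow> real) \<Rightarrow> gd_state \<Rightarrow> gd_state \<Rightarrow> bool" where
  "gd_arrive n atime s s' \<longleftrightarrow> narr s < n \<and> atime (narr s) = tm s \<and>
     s' = s\<lparr>narr := Suc (narr s), act := insert {narr s} (act s), fr := insert (narr s) (fr s)\<rparr>"

text \<open>Tight-constraint event: merge A(u) and A(v), then greedily match free
  compatible pairs inside the merged set atime the current time until none is left
  (the result of the greedy loop is exactly an arbitrary maximal matching of the
  free compatible requests of the merged set).\<close>
definition gd_merge ::
  "nat \<Rightarrow> (nat \<Rightarrow> 'a::metric_space) \<Rightarrow> (nat \<Rightarrow> real) \<Rightarrow> (nat \<Rightarrow> int) \<Rightarrow> gd_state \<Rightarrow> gd_state \<Rightarrow> bool" where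
  "gd_merge n pos atime sg s s' \<longleftrightarrow>
     (\<exists>u v Su Sv. Su \<in> act s \<and> Sv \<in> act s \<and> Su \<noteq> Sv \<and> u \<in> Su \<and> v \<in> Sv \<and>
        tight_edge n pos atime sg s u v \<and>
        tm s' = tm s \<and> narr s' = narr s \<and> yv s' = yv s \<and>
        act s' = insert (Su \<union> Sv) (act s - {Su, Sv}) \<and>
        fr s' \<subseteq> fr s \<and> fr s - fr s' \<subseteq> Su \<union> Sv \<and>
        (\<forall>w \<in> fr s - fr s'. mate s' w \<in> fr s - fr s' \<and> mate s' w \<noteq> w \<and>
            mate s' (mate s' w) = w \<and> sg (mate s' w) = - sg w \<and> mtm s' w = tm s) \<and>
        (\<forall>w. w \<notin> fr s - fr s' \<longrightarrow> mate s' w = mate s w \<and> mtm s' w = mtm s w) \<and>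
        \<not> (\<exists>a\<in>fr s' \<inter> (Su \<union> Sv). \<exists>b\<in>fr s' \<inter> (Su \<union> Sv). a \<noteq> b \<and> sg a = - sg b))"

text \<open>Dual growth: time advances from tm s to t'; every active growing set
  (containing a free request) raises its dual atime rate 1.  Allowed only if no
  constraint is tight, no pending arrival occurs before t', and no constraint
  is exceeded atime t' (so the next event happens no earlier than t').\<close>
definition grown_duals :: "gd_state \<Rightarrow> real \<Rightarrow> nat set \<Rightarrow> real" where
  "grown_duals s t' = (\<lambda>S. if S \<in> act s \<and> S \<inter> fr s \<noteq> {} then yv s S + (t' - tm s) else yv s S)"

definition gd_advance ::
  "nat \<Rightarrow> (nat \<Rightarrow> 'a::metric_space) \<Rightarrow> (nat \<Rightarrow> real) \<Rightarrow> (nat \<Rightarrow> int) \<Rightarrow> gd_state \<Rightarrow> gd_state \<Rightarrow> bool" where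
  "gd_advance n pos atime sg s s' \<longleftrightarrow>
     (\<exists>t'. tm s < t' \<and>
        (\<forall>u v. \<not> tight_edge n pos atime sg s u v) \<and>
        (\<forall>u. narr s \<le> u \<and> u < n \<longrightarrow> t' \<le> atime u) \<and>
        (\<forall>u v. cross_edge sg s u v \<longrightarrow> dual_sum n (grown_duals s t') u v \<le> ecost pos atime u v) \<and>
        s' = s\<lparr>tm := t', yv := grown_duals s t'\<rparr>)"

definition gd_step ::
  "nat \<Rightarrow> (nat \<Rightarrow> 'a::metric_space) \<Rightarrow> (nat \<Rightarrow> real) \<Rightarrow> (nat \<Rightarrow> int) \<Rightarrow> gd_state \<Rightarrow> gd_state \<Rightarrow> bool" where
  "gd_step n pos atime sg s s' \<longleftrightarrow>
     gd_arrive n atime s s' \<or> gd_merge n pos atime sg s s' \<or> gd_advance n pos atime sg s s'"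

definition gd_final_state ::
  "nat \<Rightarrow> (nat \<Rightarrow> 'a::metric_space) \<Rightarrow> (nat \<Rightarrow> real) \<Rightarrow> (nat \<Rightarrow> int) \<Rightarrow> gd_state \<Rightarrow> bool" where
  "gd_final_state n pos atime sg s \<longleftrightarrow>
     (gd_step n pos atime sg)\<^sup>*\<^sup>* gd_init s \<and> narr s = n \<and> fr s = {}"

end

theory Submission
  imports Defs
begin


lemma invol_split:
  fixes f :: "nat \<Rightarrow> real"
  assumes "finite C" "\<forall>u\<in>C. g u \<in> C \<and> g u \<noteq> u \<and> g (g u) = u"
  shows "sum f C = sum f {u\<in>C. u < g u} + sum (\<lambda>u. f (g u)) {u\<in>C. u < g u}"
proof -
  define P where "P = {u\<in>C. u < g u}"
  define Q where "Q = {u\<in>C. g u < u}"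
  have C: "C = P \<union> Q"
  proof
    show "C \<subseteq> P \<union> Q"
    proof
      fix u assume "u \<in> C"
      then have "g u \<noteq> u" using assms(2) by blast
      then have "u < g u \<or> g u < u" by linarith
      then show "u \<in> P \<union> Q" using \<open>u \<in> C\<close> unfolding P_def Q_def by blast
    qed
    show "P \<union> Q \<subseteq> C" unfolding P_def Q_def by blast
  qed
  have bij: "bij_betw g P Q"
    unfolding bij_betw_def inj_on_def
  proof (intro conjI ballI impI)
    fix x y assume "x \<in> P" "y \<in> P" "g x = g y"
    then have "g (g x) = g (g y)" by simp
    moreover have "g (g x) = x" "g (g y) = y" using \<open>x \<in> P\<close> \<open>y \<in> P\<close> assms(2) unfolding P_def by auto
    ultimately show "x = y" by simp
  next
    show "g ` P = Q"
    proof
      show "g ` P \<subseteq> Q" using assms(2) unfolding P_def Q_def by auto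
      show "Q \<subseteq> g ` P"
      proof
        fix u assume u: "u \<in> Q"
        then have "g u \<in> P" using assms(2) unfolding P_def Q_def by auto
        moreover have "u = g (g u)" using u assms(2) unfolding Q_def by auto
        ultimately show "u \<in> g ` P" by blast
      qed
    qed
  qed
  have "sum (\<lambda>u. f (g u)) P = sum f Q" using sum.reindex_bij_betw[OF bij] .
  moreover have "finite P" "finite Q" using assms(1) unfolding P_def Q_def by auto
  moreover have "P \<inter> Q = {}" unfolding P_def Q_def by auto
  ultimately have "sum f (P \<union> Q) = sum f P + sum (\<lambda>u. f (g u)) P"
    by (simp add: sum.union_disjoint)
  then show ?thesis using C unfolding P_def by simp
qed

lemma invol_sum2:
  fixes f :: "nat \<Rightarrow> real"
  assumes "finite C" "\<forall>u\<in>C. g u \<in> C \<and> g u \<noteq> u \<and> g (g u) = u" "\<forall>u\<in>C. f (g u) = f u"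
  shows "sum f C = 2 * sum f {u\<in>C. u < g u}"
proof -
  have "sum (\<lambda>u. f (g u)) {u\<in>C. u < g u} = sum f {u\<in>C. u < g u}"
    using assms(3) by (intro sum.cong) auto
  then show ?thesis using invol_split[OF assms(1,2), of f] by simp
qed

lemma invol_even:
  fixes C :: "nat set"
  assumes "finite C" "\<forall>u\<in>C. g u \<in> C \<and> g u \<noteq> u \<and> g (g u) = u"
  shows "even (card C)"
proof -
  have h: "\<forall>u\<in>C. (\<lambda>_. (1::real)) (g u) = (\<lambda>_. (1::real)) u" by simp
  have "sum (\<lambda>_. (1::real)) C = 2 * sum (\<lambda>_. (1::real)) {u\<in>C. u < g u}"
    using invol_sum2[OF assms h] .
  then have "real (card C) = real (2 * card {u\<in>C. u < g u})" by simp
  then have "card C = 2 * card {u\<in>C. u < g u}" by (simp only: of_nat_eq_iff)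
  then show ?thesis by simp
qed

lemma invol_sum0:
  fixes f :: "nat \<Rightarrow> real"
  assumes "finite C" "\<forall>u\<in>C. g u \<in> C \<and> g (g u) = u" "\<forall>u\<in>C. f (g u) = - f u"
  shows "sum f C = 0"
proof -
  have bij: "bij_betw g C C"
    unfolding bij_betw_def inj_on_def
  proof (intro conjI ballI impI)
    fix x y assume "x \<in> C" "y \<in> C" "g x = g y"
    then have "g (g x) = g (g y)" by simp
    moreover have "g (g x) = x" "g (g y) = y" using \<open>x \<in> C\<close> \<open>y \<in> C\<close> assms(2) by auto
    ultimately show "x = y" by simp
  next
    show "g ` C = C"
    proof
      show "g ` C \<subseteq> C" using assms(2) by auto
      show "C \<subseteq> g ` C"
      proof
        fix u assume u: "u \<in> C"
        then have "g u \<in> C" "u = g (g u)" using assms(2) by auto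
        then show "u \<in> g ` C" by blast
      qed
    qed
  qed
  have "sum (\<lambda>u. f (g u)) C = sum f C" using sum.reindex_bij_betw[OF bij] .
  moreover have "sum (\<lambda>u. f (g u)) C = sum (\<lambda>u. - f u) C"
    using assms(3) by (intro sum.cong) auto
  ultimately show ?thesis by (simp add: sum_negf)
qed

lemma sum_le_support:
  fixes y :: "'b \<Rightarrow> real"
  assumes "finite A" "finite B" "\<forall>T\<in>A. y T \<noteq> 0 \<longrightarrow> T \<in> B" "\<forall>T\<in>B. 0 \<le> y T"
  shows "sum y A \<le> sum y B"
proof -
  have "sum y A = sum y (A \<inter> B)"
    using assms by (intro sum.mono_neutral_right) auto
  also have "\<dots> \<le> sum y B" using assms by (intro sum_mono2) auto
  finally show ?thesis .
qed

lemma invol_bij: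
  assumes "\<forall>u\<in>C. g u \<in> C \<and> g (g u) = u"
  shows "bij_betw g C C"
  unfolding bij_betw_def inj_on_def
proof (intro conjI ballI impI)
  fix x y assume "x \<in> C" "y \<in> C" "g x = g y"
  then have "g (g x) = g (g y)" by simp
  moreover have "g (g x) = x" "g (g y) = y" using \<open>x \<in> C\<close> \<open>y \<in> C\<close> assms by auto
  ultimately show "x = y" by simp
next
  show "g ` C = C"
  proof
    show "g ` C \<subseteq> C" using assms by auto
    show "C \<subseteq> g ` C"
    proof
      fix u assume u: "u \<in> C"
      then have "g u \<in> C" "u = g (g u)" using assms by auto
      then show "u \<in> g ` C" by blast
    qed
  qed
qed

lemma invol_reindex:
  fixes f :: "nat \<Rightarrow> real"
  assumes "\<forall>u\<in>C. g u \<in> C \<and> g (g u) = u"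
  shows "sum (\<lambda>u. f (g u)) C = sum f C"
  using sum.reindex_bij_betw[OF invol_bij[OF assms]] .



definition gg :: "nat set \<Rightarrow> nat \<Rightarrow> nat \<Rightarrow> real" where
  "gg T u v = (if (u \<in> T) = (v \<in> T) then (if u \<in> T then 0 else 2) else 1)"

locale gdl =
  fixes n :: nat and pos :: "nat \<Rightarrow> 'a::metric_space" and atime :: "nat \<Rightarrow> real"
    and sg :: "nat \<Rightarrow> int" and bip :: bool
  assumes sgv: "\<And>u. u < n \<Longrightarrow> (if bip then sg u = 1 \<or> sg u = -1 else sg u = 0)"
begin

definition sur :: "nat set \<Rightarrow> real" where
  "sur T = (if bip then \<bar>\<Sum>u\<in>T. real_of_int (sg u)\<bar> else real (card T mod 2))"

lemma sep_card:
  assumes vs: "valid_solution n atime sg mt mtt" and T: "T \<subseteq> {..<n}"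
  shows "2 * sur T \<le> real (card {u\<in>{..<n}. (u \<in> T) \<noteq> (mt u \<in> T)})"
proof -
  have fT: "finite T" using T finite_subset by blast
  define A where "A = {u\<in>T. mt u \<notin> T}"
  define B where "B = {u\<in>{..<n}. u \<notin> T \<and> mt u \<in> T}"
  have v: "\<And>u. u < n \<Longrightarrow> mt u < n \<and> mt u \<noteq> u \<and> mt (mt u) = u \<and> sg (mt u) = - sg u"
    using vs unfolding valid_solution_def by blast
  have sepeq: "{u\<in>{..<n}. (u \<in> T) \<noteq> (mt u \<in> T)} = A \<union> B"
    using T unfolding A_def B_def by auto
  have fA: "finite A" "finite B" unfolding A_def B_def using fT by auto
  have dAB: "A \<inter> B = {}" unfolding A_def B_def by auto
  have bij: "bij_betw mt A B"
    unfolding bij_betw_def inj_on_def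
  proof (intro conjI ballI impI)
    fix x y assume "x \<in> A" "y \<in> A" "mt x = mt y"
    then have "mt (mt x) = mt (mt y)" by simp
    moreover have "mt (mt x) = x" "mt (mt y) = y" using \<open>x \<in> A\<close> \<open>y \<in> A\<close> v T unfolding A_def by auto
    ultimately show "x = y" by simp
  next
    show "mt ` A = B"
    proof
      show "mt ` A \<subseteq> B" using v T unfolding A_def B_def by auto
      show "B \<subseteq> mt ` A"
      proof
        fix u assume u: "u \<in> B"
        then have "mt u \<in> A" "u = mt (mt u)" using v unfolding A_def B_def by auto
        then show "u \<in> mt ` A" by blast
      qed
    qed
  qed
  have cB: "card B = card A" using bij_betw_same_card[OF bij] by simp
  have ccard: "card {u\<in>{..<n}. (u \<in> T) \<noteq> (mt u \<in> T)} = 2 * card A"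
    using sepeq card_Un_disjoint[OF fA dAB] cB by simp
  define M where "M = T - A"
  have Mcl: "\<forall>u\<in>M. mt u \<in> M \<and> mt u \<noteq> u \<and> mt (mt u) = u"
    using v T unfolding M_def A_def by auto
  have fM: "finite M" using fT unfolding M_def by auto
  have TMA: "T = M \<union> A" "M \<inter> A = {}" unfolding M_def A_def by auto
  have "sur T \<le> real (card A)"
  proof (cases bip)
    case True
    have "(\<Sum>u\<in>M. real_of_int (sg u)) = 0"
      by (rule invol_sum0[OF fM, of mt]) (use Mcl v T in \<open>auto simp: M_def\<close>)
    then have "(\<Sum>u\<in>T. real_of_int (sg u)) = (\<Sum>u\<in>A. real_of_int (sg u))"
      using TMA fM fA by (simp add: sum.union_disjoint)
    moreover have "\<bar>\<Sum>u\<in>A. real_of_int (sg u)\<bar> \<le> (\<Sum>u\<in>A. \<bar>real_of_int (sg u)\<bar>)"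
      by (rule sum_abs)
    moreover have "(\<Sum>u\<in>A. \<bar>real_of_int (sg u)\<bar>) = (\<Sum>u\<in>A. 1)"
    proof (rule sum.cong)
      fix u assume "u \<in> A"
      then have "u < n" using T unfolding A_def by auto
      then show "\<bar>real_of_int (sg u)\<bar> = 1" using sgv[of u] True by auto
    qed simp
    ultimately show ?thesis using True unfolding sur_def by simp
  next
    case False
    have "even (card M)" using invol_even[OF fM Mcl] .
    moreover have "card T = card M + card A" using TMA fM fA card_Un_disjoint by metis
    ultimately have "card T mod 2 = card A mod 2" by presburger
    then have "card T mod 2 \<le> card A" by (metis mod_less_eq_dividend)
    then show ?thesis using False unfolding sur_def by simp
  qed
  then show ?thesis using ccard by simp
qed

lemma dual_sum_alt:
  "dual_sum n y u v = (\<Sum>T\<in>Pow {..<n}. if (u \<in> T) \<noteq> (v \<in> T) then y T else 0)"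
proof -
  have "{S. S \<subseteq> {..<n} \<and> (u \<in> S) \<noteq> (v \<in> S)} = {T\<in>Pow {..<n}. (u \<in> T) \<noteq> (v \<in> T)}" by auto
  then have "dual_sum n y u v = sum y {T\<in>Pow {..<n}. (u \<in> T) \<noteq> (v \<in> T)}"
    unfolding dual_sum_def by simp
  also have "\<dots> = (\<Sum>T\<in>Pow {..<n}. if (u \<in> T) \<noteq> (v \<in> T) then y T else 0)"
    by (rule sum.inter_filter) simp
  finally show ?thesis .
qed

lemma sum_if_const:
  fixes c :: real
  assumes "finite A"
  shows "(\<Sum>u\<in>A. if P u then c else 0) = c * real (card {u\<in>A. P u})"
  using assms by (simp add: sum.inter_filter[symmetric])

lemma weak_dual:
  assumes vs: "valid_solution n atime sg mt mtt" and ynn: "\<forall>T. 0 \<le> y T"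
    and feas: "\<forall>u<n. \<forall>v<n. u \<noteq> v \<longrightarrow> sg u = - sg v \<longrightarrow> dual_sum n y u v \<le> ecost pos atime u v"
  shows "(\<Sum>T\<in>Pow {..<n}. y T * sur T) \<le> matching_cost n pos atime mt mtt"
proof -
  have v: "\<And>u. u < n \<Longrightarrow> mt u < n \<and> mt u \<noteq> u \<and> mt (mt u) = u \<and> sg (mt u) = - sg u \<and>
       mtt (mt u) = mtt u \<and> atime u \<le> mtt u"
    using vs unfolding valid_solution_def by blast
  have cl: "\<forall>u\<in>{..<n}. mt u \<in> {..<n} \<and> mt u \<noteq> u \<and> mt (mt u) = u" using v by auto
  have cl2: "\<forall>u\<in>{..<n}. mt u \<in> {..<n} \<and> mt (mt u) = u" using v by auto
  have seteq: "{u\<in>{..<n}. u < mt u} = {u. u < n \<and> u < mt u}" by auto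
  have h1: "(\<Sum>u<n. dist (pos u) (pos (mt u))) = 2 * (\<Sum>u\<in>{u. u < n \<and> u < mt u}. dist (pos u) (pos (mt u)))"
    using invol_sum2[OF _ cl, of "\<lambda>u. dist (pos u) (pos (mt u))"] v seteq by (simp add: dist_commute)
  have h2: "(\<Sum>u<n. mtt (mt u) - atime (mt u)) = (\<Sum>u<n. mtt u - atime u)"
    using invol_reindex[OF cl2, of "\<lambda>u. mtt u - atime u"] .
  have "2 * matching_cost n pos atime mt mtt =
      (\<Sum>u<n. dist (pos u) (pos (mt u))) + (\<Sum>u<n. mtt u - atime u) + (\<Sum>u<n. mtt (mt u) - atime (mt u))"
    unfolding matching_cost_def using h1 h2 by simp
  also have "\<dots> = (\<Sum>u<n. dist (pos u) (pos (mt u)) + (mtt u - atime u) + (mtt (mt u) - atime (mt u)))"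
    by (simp add: sum.distrib)
  also have "\<dots> \<ge> (\<Sum>u<n. dual_sum n y u (mt u))"
  proof (rule sum_mono)
    fix u assume "u \<in> {..<n}"
    then have u: "u < n" by simp
    have "dual_sum n y u (mt u) \<le> ecost pos atime u (mt u)"
      using feas v[OF u] u by auto
    also have "\<dots> \<le> dist (pos u) (pos (mt u)) + (mtt u - atime u) + (mtt (mt u) - atime (mt u))"
      using v[OF u] v[of "mt u"] unfolding ecost_def by auto
    finally show "dual_sum n y u (mt u) \<le> dist (pos u) (pos (mt u)) + (mtt u - atime u) + (mtt (mt u) - atime (mt u))" .
  qed
  finally have c1: "(\<Sum>u<n. dual_sum n y u (mt u)) \<le> 2 * matching_cost n pos atime mt mtt" .
  have "(\<Sum>u<n. dual_sum n y u (mt u)) =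
      (\<Sum>u<n. \<Sum>T\<in>Pow {..<n}. if (u \<in> T) \<noteq> (mt u \<in> T) then y T else 0)"
    by (simp add: dual_sum_alt)
  also have "\<dots> = (\<Sum>T\<in>Pow {..<n}. \<Sum>u<n. if (u \<in> T) \<noteq> (mt u \<in> T) then y T else 0)"
    by (rule sum.swap)
  also have "\<dots> = (\<Sum>T\<in>Pow {..<n}. y T * real (card {u\<in>{..<n}. (u \<in> T) \<noteq> (mt u \<in> T)}))"
    by (simp add: sum_if_const)
  finally have c2: "(\<Sum>u<n. dual_sum n y u (mt u)) = (\<Sum>T\<in>Pow {..<n}. y T * real (card {u\<in>{..<n}. (u \<in> T) \<noteq> (mt u \<in> T)}))" .
  have "(\<Sum>T\<in>Pow {..<n}. y T * (2 * sur T)) \<le> (\<Sum>T\<in>Pow {..<n}. y T * real (card {u\<in>{..<n}. (u \<in> T) \<noteq> (mt u \<in> T)}))"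
  proof (rule sum_mono)
    fix T assume "T \<in> Pow {..<n}"
    then show "y T * (2 * sur T) \<le> y T * real (card {u\<in>{..<n}. (u \<in> T) \<noteq> (mt u \<in> T)})"
      using sep_card[OF vs, of T] ynn by (intro mult_left_mono) auto
  qed
  moreover have "(\<Sum>T\<in>Pow {..<n}. y T * (2 * sur T)) = 2 * (\<Sum>T\<in>Pow {..<n}. y T * sur T)"
    by (simp add: sum_distrib_left algebra_simps)
  ultimately show ?thesis using c1 c2 by linarith
qed

definition Ysum :: "gd_state \<Rightarrow> real" where
  "Ysum s = (\<Sum>T\<in>Pow {..<n}. yv s T)"
definition Dsum :: "gd_state \<Rightarrow> real" where
  "Dsum s = (\<Sum>T\<in>Pow {..<n}. yv s T * sur T)"
definition Wsum :: "gd_state \<Rightarrow> real" where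
  "Wsum s = (\<Sum>u\<in>{..<narr s} - fr s. mtm s u - atime u) + (\<Sum>u\<in>fr s. tm s - atime u)"
definition matched :: "gd_state \<Rightarrow> nat \<Rightarrow> bool" where
  "matched s u \<longleftrightarrow> mate s u < narr s \<and> mate s u \<notin> fr s \<and> mate s u \<noteq> u \<and> mate s (mate s u) = u \<and>
     sg (mate s u) = - sg u \<and> mtm s (mate s u) = mtm s u \<and> atime u \<le> mtm s u \<and>
     dist (pos u) (pos (mate s u)) \<le> 2 * Ysum s \<and> (\<exists>S\<in>act s. u \<in> S \<and> mate s u \<in> S)"
definition freeok :: "gd_state \<Rightarrow> nat set \<Rightarrow> bool" where
  "freeok s S \<longleftrightarrow> (if bip then (\<forall>a\<in>S \<inter> fr s. \<forall>b\<in>S \<inter> fr s. sg a = sg b) else card (S \<inter> fr s) \<le> 1)"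

definition inv :: "gd_state \<Rightarrow> bool" where
  "inv s \<longleftrightarrow>
    narr s \<le> n \<and>
    (\<forall>u<narr s. atime u \<le> tm s) \<and>
    fr s \<subseteq> {..<narr s} \<and>
    (\<forall>S\<in>act s. S \<noteq> {} \<and> S \<subseteq> {..<narr s}) \<and>
    (\<forall>S\<in>act s. \<forall>S'\<in>act s. S \<noteq> S' \<longrightarrow> S \<inter> S' = {}) \<and>
    (\<forall>u<narr s. \<exists>S\<in>act s. u \<in> S) \<and>
    (\<forall>T. 0 \<le> yv s T) \<and>
    (\<forall>T. yv s T \<noteq> 0 \<longrightarrow> (\<exists>R\<in>act s. T \<subseteq> R) \<and> 1 \<le> sur T) \<and>
    (\<forall>u<narr s. u \<notin> fr s \<longrightarrow> matched s u) \<and>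
    (\<forall>S\<in>act s. freeok s S) \<and>
    (\<forall>u<narr s. (\<Sum>T\<in>{T\<in>Pow {..<n}. u \<in> T}. yv s T) \<le> tm s - atime u) \<and>
    (\<forall>u<narr s. \<forall>v<narr s. u \<noteq> v \<longrightarrow> sg u = - sg v \<longrightarrow> dual_sum n (yv s) u v \<le> ecost pos atime u v) \<and>
    Wsum s = Dsum s \<and>
    (\<forall>S\<in>act s. \<forall>u\<in>S. \<forall>v\<in>S. dist (pos u) (pos v) \<le> (\<Sum>T\<in>Pow S. yv s T * gg T u v))"

lemma inv_init: "inv gd_init"
  unfolding inv_def gd_init_def Wsum_def Dsum_def by simp

lemma invD0:
  assumes "inv s"
  shows "narr s \<le> n" "(\<forall>u<narr s. atime u \<le> tm s)" "fr s \<subseteq> {..<narr s}"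
    "(\<forall>S\<in>act s. S \<noteq> {} \<and> S \<subseteq> {..<narr s})"
    "(\<forall>S\<in>act s. \<forall>S'\<in>act s. S \<noteq> S' \<longrightarrow> S \<inter> S' = {})"
    "(\<forall>u<narr s. \<exists>S\<in>act s. u \<in> S)"
    "(\<forall>T. 0 \<le> yv s T)"
    "(\<forall>T. yv s T \<noteq> 0 \<longrightarrow> (\<exists>R\<in>act s. T \<subseteq> R) \<and> 1 \<le> sur T)"
    "(\<forall>u<narr s. u \<notin> fr s \<longrightarrow> matched s u)"
    "(\<forall>S\<in>act s. freeok s S)"
    "(\<forall>u<narr s. (\<Sum>T\<in>{T\<in>Pow {..<n}. u \<in> T}. yv s T) \<le> tm s - atime u)"
    "(\<forall>u<narr s. \<forall>v<narr s. u \<noteq> v \<longrightarrow> sg u = - sg v \<longrightarrow> dual_sum n (yv s) u v \<le> ecost pos atime u v)"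
    "Wsum s = Dsum s"
    "(\<forall>S\<in>act s. \<forall>u\<in>S. \<forall>v\<in>S. dist (pos u) (pos v) \<le> (\<Sum>T\<in>Pow S. yv s T * gg T u v))"
  using assms unfolding inv_def apply -
  by (elim conjE, assumption)+

lemmas invD = invD0[rule_format]

lemma sur_active:
  assumes I: "inv s" and S: "S \<in> act s"
  shows "sur S = real (card (S \<inter> fr s))"
proof -
  note D = invD[OF I]
  have Sn: "S \<subseteq> {..<narr s}" using D(4)[OF S] by blast
  have fS: "finite S" using Sn finite_subset by blast
  define F where "F = S \<inter> fr s"
  define M where "M = S - fr s"
  have fF: "finite F" "finite M" using fS unfolding F_def M_def by auto
  have SFM: "S = F \<union> M" "F \<inter> M = {}" unfolding F_def M_def by auto
  have mM: "\<And>u. u \<in> M \<Longrightarrow> matched s u" using Sn D(9) unfolding M_def by auto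
  have Mcl: "\<forall>u\<in>M. mate s u \<in> M \<and> mate s u \<noteq> u \<and> mate s (mate s u) = u \<and> sg (mate s u) = - sg u"
  proof
    fix u assume u: "u \<in> M"
    have m: "matched s u" using mM[OF u] .
    then obtain S' where S': "S' \<in> act s" "u \<in> S'" "mate s u \<in> S'" unfolding matched_def by blast
    have "S' = S"
    proof (rule ccontr)
      assume "S' \<noteq> S"
      then have "S' \<inter> S = {}" using D(5)[OF S'(1) S] by blast
      then show False using S'(2) u unfolding M_def by blast
    qed
    then show "mate s u \<in> M \<and> mate s u \<noteq> u \<and> mate s (mate s u) = u \<and> sg (mate s u) = - sg u"
      using m S' unfolding matched_def M_def by auto
  qed
  have fo: "freeok s S" using D(10)[OF S] .
  show ?thesis
  proof (cases bip)
    case True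
    have "(\<Sum>u\<in>M. real_of_int (sg u)) = 0"
      by (rule invol_sum0[OF fF(2), of "mate s"]) (use Mcl in auto)
    then have e1: "(\<Sum>u\<in>S. real_of_int (sg u)) = (\<Sum>u\<in>F. real_of_int (sg u))"
      using SFM fF by (simp add: sum.union_disjoint)
    have "\<bar>\<Sum>u\<in>F. real_of_int (sg u)\<bar> = real (card F)"
    proof (cases "F = {}")
      case True then show ?thesis by simp
    next
      case False
      then obtain a where a: "a \<in> F" by blast
      have same: "\<forall>b\<in>F. sg b = sg a"
      proof
        fix b assume b: "b \<in> F"
        have "\<forall>a\<in>S \<inter> fr s. \<forall>b\<in>S \<inter> fr s. sg a = sg b" using fo True unfolding freeok_def by (simp only: if_True)
        then show "sg b = sg a" using a b unfolding F_def by blast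
      qed
      have "a < n" using a Sn D(1) unfolding F_def by auto
      then have sa: "\<bar>real_of_int (sg a)\<bar> = 1" using sgv[of a] True by auto
      have "(\<Sum>u\<in>F. real_of_int (sg u)) = (\<Sum>u\<in>F. real_of_int (sg a))"
        using same by (intro sum.cong) auto
      then show ?thesis using sa by (simp add: abs_mult)
    qed
    then show ?thesis using e1 True unfolding sur_def F_def by simp
  next
    case False
    have "even (card M)" by (rule invol_even[OF fF(2), of "mate s"]) (use Mcl in auto)
    moreover have "card S = card F + card M" using SFM fF card_Un_disjoint by metis
    moreover have "card F \<le> 1" using fo False unfolding freeok_def F_def by simp
    ultimately have "card S mod 2 = card F" by presburger
    then show ?thesis using False unfolding sur_def F_def by simp
  qed
qed

lemma dual_sum_sym: "dual_sum n y u v = dual_sum n y v u"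
  unfolding dual_sum_def by (rule sum.cong) auto

lemma invI:
  assumes "narr s \<le> n" "(\<forall>u<narr s. atime u \<le> tm s)" "fr s \<subseteq> {..<narr s}"
    "(\<forall>S\<in>act s. S \<noteq> {} \<and> S \<subseteq> {..<narr s})"
    "(\<forall>S\<in>act s. \<forall>S'\<in>act s. S \<noteq> S' \<longrightarrow> S \<inter> S' = {})"
    "(\<forall>u<narr s. \<exists>S\<in>act s. u \<in> S)"
    "(\<forall>T. 0 \<le> yv s T)"
    "(\<forall>T. yv s T \<noteq> 0 \<longrightarrow> (\<exists>R\<in>act s. T \<subseteq> R) \<and> 1 \<le> sur T)"
    "(\<forall>u<narr s. u \<notin> fr s \<longrightarrow> matched s u)"
    "(\<forall>S\<in>act s. freeok s S)"
    "(\<forall>u<narr s. (\<Sum>T\<in>{T\<in>Pow {..<n}. u \<in> T}. yv s T) \<le> tm s - atime u)"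
    "(\<forall>u<narr s. \<forall>v<narr s. u \<noteq> v \<longrightarrow> sg u = - sg v \<longrightarrow> dual_sum n (yv s) u v \<le> ecost pos atime u v)"
    "Wsum s = Dsum s"
    "(\<forall>S\<in>act s. \<forall>u\<in>S. \<forall>v\<in>S. dist (pos u) (pos v) \<le> (\<Sum>T\<in>Pow S. yv s T * gg T u v))"
  shows "inv s"
  unfolding inv_def by (intro conjI; rule assms)

lemma gg_nn: "0 \<le> gg T u v" unfolding gg_def by auto

lemma arrive_inv:
  assumes I: "inv s" and A: "gd_arrive n atime s s'"
  shows "inv s'"
proof -
  note D = invD[OF I]
  define u0 where "u0 = narr s"
  have u0n: "u0 < n" and at0: "atime u0 = tm s" using A unfolding gd_arrive_def u0_def by auto
  have s': "s' = s\<lparr>narr := Suc u0, act := insert {u0} (act s), fr := insert u0 (fr s)\<rparr>"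
    using A unfolding gd_arrive_def u0_def by auto
  have e: "narr s' = Suc u0" "act s' = insert {u0} (act s)" "fr s' = insert u0 (fr s)"
    "tm s' = tm s" "yv s' = yv s" "mate s' = mate s" "mtm s' = mtm s"
    using s' by auto
  have Y: "Ysum s' = Ysum s" "Dsum s' = Dsum s" unfolding Ysum_def Dsum_def e by auto
  have actsub: "\<And>S. S \<in> act s \<Longrightarrow> S \<subseteq> {..<u0}" using D(4) unfolding u0_def by blast
  have u0nS: "\<And>S. S \<in> act s \<Longrightarrow> u0 \<notin> S" using actsub by blast
  have frs: "fr s \<subseteq> {..<u0}" using D(3) unfolding u0_def .
  have ysupp: "\<And>T. yv s T \<noteq> 0 \<Longrightarrow> T \<subseteq> {..<u0}"
    using D(8) actsub by blast
  have c1: "narr s' \<le> n" using u0n e by simp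
  have c2: "\<forall>u<narr s'. atime u \<le> tm s'"
    using D(2) at0 unfolding e u0_def by (auto simp: less_Suc_eq)
  have c3: "fr s' \<subseteq> {..<narr s'}" using frs unfolding e by auto
  have c4: "\<forall>S\<in>act s'. S \<noteq> {} \<and> S \<subseteq> {..<narr s'}" using D(4) actsub unfolding e by force
  have c5: "\<forall>S\<in>act s'. \<forall>S'\<in>act s'. S \<noteq> S' \<longrightarrow> S \<inter> S' = {}"
    using D(5) u0nS unfolding e by blast
  have c6: "\<forall>u<narr s'. \<exists>S\<in>act s'. u \<in> S"
    using D(6) unfolding e u0_def by (auto simp: less_Suc_eq)
  have c7: "\<forall>T. 0 \<le> yv s' T" using D(7) unfolding e by blast
  have c8: "\<forall>T. yv s' T \<noteq> 0 \<longrightarrow> (\<exists>R\<in>act s'. T \<subseteq> R) \<and> 1 \<le> sur T"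
    using D(8) unfolding e by blast
  have c9: "\<forall>u<narr s'. u \<notin> fr s' \<longrightarrow> matched s' u"
  proof (intro allI impI)
    fix u assume u: "u < narr s'" "u \<notin> fr s'"
    then have u': "u < narr s" "u \<notin> fr s" unfolding e u0_def by auto
    have m: "matched s u" using D(9)[OF u'] .
    then have "mate s u < u0" unfolding matched_def u0_def by blast
    then show "matched s' u" using m unfolding matched_def e Y u0_def by auto
  qed
  have fe: "\<And>S. S \<in> act s \<Longrightarrow> S \<inter> fr s' = S \<inter> fr s" using u0nS unfolding e by auto
  have c10: "\<forall>S\<in>act s'. freeok s' S"
  proof
    fix S assume S: "S \<in> act s'"
    show "freeok s' S"
    proof (cases "S = {u0}")
      case True
      have "S \<inter> fr s' = {u0}" using True unfolding e by auto
      then show ?thesis unfolding freeok_def by simp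
    next
      case False
      then have S0: "S \<in> act s" using S unfolding e by auto
      have "freeok s S" using D(10) S0 by blast
      then show ?thesis unfolding freeok_def fe[OF S0] .
    qed
  qed
  have z: "(\<Sum>T\<in>{T\<in>Pow {..<n}. u0 \<in> T}. yv s T) = 0"
    using ysupp by (intro sum.neutral) blast
  have c11: "\<forall>u<narr s'. (\<Sum>T\<in>{T\<in>Pow {..<n}. u \<in> T}. yv s' T) \<le> tm s' - atime u"
  proof (intro allI impI)
    fix u assume "u < narr s'"
    then have "u < u0 \<or> u = u0" unfolding e by auto
    then show "(\<Sum>T\<in>{T\<in>Pow {..<n}. u \<in> T}. yv s' T) \<le> tm s' - atime u"
    proof
      assume "u < u0" then show ?thesis using D(11)[of u] unfolding e u0_def by simp
    next
      assume "u = u0" then show ?thesis using z at0 unfolding e by simp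
    qed
  qed
  have key: "\<And>w. w < u0 \<Longrightarrow> dual_sum n (yv s) u0 w \<le> ecost pos atime u0 w"
  proof -
    fix w assume w: "w < u0"
    have "dual_sum n (yv s) u0 w \<le> (\<Sum>T\<in>{T\<in>Pow {..<n}. w \<in> T}. yv s T)"
      unfolding dual_sum_def
    proof (rule sum_le_support)
      show "finite {S. S \<subseteq> {..<n} \<and> (u0 \<in> S) \<noteq> (w \<in> S)}" by simp
      show "finite {T \<in> Pow {..<n}. w \<in> T}" by simp
      show "\<forall>T\<in>{S. S \<subseteq> {..<n} \<and> (u0 \<in> S) \<noteq> (w \<in> S)}. yv s T \<noteq> 0 \<longrightarrow> T \<in> {T \<in> Pow {..<n}. w \<in> T}"
        using ysupp by blast
      show "\<forall>T\<in>{T \<in> Pow {..<n}. w \<in> T}. 0 \<le> yv s T" using D(7) by blast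
    qed
    also have "\<dots> \<le> tm s - atime w" using D(11)[of w] w unfolding u0_def by simp
    also have "\<dots> \<le> ecost pos atime u0 w"
      using at0 zero_le_dist[of "pos u0" "pos w"] abs_ge_self[of "atime u0 - atime w"] unfolding ecost_def by linarith
    finally show "dual_sum n (yv s) u0 w \<le> ecost pos atime u0 w" .
  qed
  have c12: "\<forall>u<narr s'. \<forall>v<narr s'. u \<noteq> v \<longrightarrow> sg u = - sg v \<longrightarrow> dual_sum n (yv s') u v \<le> ecost pos atime u v"
  proof (intro allI impI)
    fix u v assume uv: "u < narr s'" "v < narr s'" "u \<noteq> v" "sg u = - sg v"
    then have "(u < u0 \<and> v < u0) \<or> (u = u0 \<and> v < u0) \<or> (v = u0 \<and> u < u0)" unfolding e by auto
    then show "dual_sum n (yv s') u v \<le> ecost pos atime u v"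
    proof (elim disjE conjE)
      assume "u < u0" "v < u0" then show ?thesis using D(12)[of u v] uv unfolding e u0_def by simp
    next
      assume "u = u0" "v < u0" then show ?thesis using key[of v] unfolding e by simp
    next
      assume "v = u0" "u < u0" then show ?thesis using key[of u] dual_sum_sym[of "yv s" u v]
        unfolding e ecost_def by (simp add: dist_commute abs_minus_commute)
    qed
  qed
  have c13: "Wsum s' = Dsum s'"
  proof -
    have "{..<narr s'} - fr s' = {..<narr s} - fr s" unfolding e u0_def by auto
    moreover have "u0 \<notin> fr s" using frs by auto
    ultimately have "Wsum s' = Wsum s" unfolding Wsum_def e using at0 by (simp add: finite_subset[OF frs])
    then show ?thesis using D(13) Y by simp
  qed
  have c14: "\<forall>S\<in>act s'. \<forall>u\<in>S. \<forall>v\<in>S. dist (pos u) (pos v) \<le> (\<Sum>T\<in>Pow S. yv s' T * gg T u v)"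
  proof (intro ballI)
    fix S u v assume S: "S \<in> act s'" and uv: "u \<in> S" "v \<in> S"
    show "dist (pos u) (pos v) \<le> (\<Sum>T\<in>Pow S. yv s' T * gg T u v)"
    proof (cases "S = {u0}")
      case True
      have "0 \<le> (\<Sum>T\<in>Pow S. yv s' T * gg T u v)"
        using D(7) gg_nn unfolding e by (intro sum_nonneg mult_nonneg_nonneg) auto
      then show ?thesis using True uv by simp
    next
      case False
      then have "S \<in> act s" using S unfolding e by auto
      then show ?thesis using D(14) uv unfolding e by blast
    qed
  qed
  show ?thesis by (rule invI[OF c1 c2 c3 c4 c5 c6 c7 c8 c9 c10 c11 c12 c13 c14])
qed

lemma card_fr_split:
  assumes I: "inv s"
  shows "real (card (fr s)) = (\<Sum>S\<in>act s. real (card (S \<inter> fr s)))"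
proof -
  note D = invD[OF I]
  have fa: "finite (act s)"
  proof (rule finite_subset)
    show "act s \<subseteq> Pow {..<narr s}" using D(4) by blast
  qed simp
  have fr: "fr s = (\<Union>S\<in>act s. S \<inter> fr s)"
  proof
    show "fr s \<subseteq> (\<Union>S\<in>act s. S \<inter> fr s)"
    proof
      fix u assume u: "u \<in> fr s"
      then have "u < narr s" using D(3) by auto
      then obtain S where "S \<in> act s" "u \<in> S" using D(6) by blast
      then show "u \<in> (\<Union>S\<in>act s. S \<inter> fr s)" using u by blast
    qed
  qed blast
  have fin: "\<forall>S\<in>act s. finite (S \<inter> fr s)"
    using D(4) finite_subset by (meson finite_Int finite_lessThan)
  have disj: "\<forall>S\<in>act s. \<forall>S'\<in>act s. S \<noteq> S' \<longrightarrow> (S \<inter> fr s) \<inter> (S' \<inter> fr s) = {}"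
    using D(5) by blast
  have "card (fr s) = (\<Sum>S\<in>act s. card (S \<inter> fr s))"
    by (subst fr, rule card_UN_disjoint[OF fa fin disj])
  then show ?thesis by simp
qed

lemma advance_inv:
  assumes I: "inv s" and A: "gd_advance n pos atime sg s s'"
  shows "inv s'"
proof -
  note D = invD[OF I]
  obtain t' where t': "tm s < t'" "\<forall>u v. cross_edge sg s u v \<longrightarrow> dual_sum n (grown_duals s t') u v \<le> ecost pos atime u v"
    and s': "s' = s\<lparr>tm := t', yv := grown_duals s t'\<rparr>"
    using A unfolding gd_advance_def by blast
  define \<delta> where "\<delta> = t' - tm s"
  have dpos: "0 < \<delta>" using t' unfolding \<delta>_def by simp
  define G where "G = (\<lambda>S. S \<in> act s \<and> S \<inter> fr s \<noteq> {})"
  have yv': "\<And>T. yv s' T = yv s T + (if G T then \<delta> else 0)"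
    using s' unfolding grown_duals_def G_def \<delta>_def by simp
  have e: "narr s' = narr s" "act s' = act s" "fr s' = fr s" "tm s' = t'" "mate s' = mate s" "mtm s' = mtm s"
    using s' by auto
  have yge: "\<And>T. yv s T \<le> yv s' T" using yv' dpos by simp
  have Yge: "Ysum s \<le> Ysum s'" unfolding Ysum_def by (rule sum_mono) (rule yge)
  have fa: "finite (act s)"
  proof (rule finite_subset)
    show "act s \<subseteq> Pow {..<narr s}" using D(4) by blast
  qed simp
  have c1: "narr s' \<le> n" using D(1) e by simp
  have c2: "\<forall>u<narr s'. atime u \<le> tm s'" using D(2) t' unfolding e by force
  have c3: "fr s' \<subseteq> {..<narr s'}" using D(3) unfolding e .
  have c4: "\<forall>S\<in>act s'. S \<noteq> {} \<and> S \<subseteq> {..<narr s'}" using D(4) unfolding e by blast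
  have c5: "\<forall>S\<in>act s'. \<forall>S'\<in>act s'. S \<noteq> S' \<longrightarrow> S \<inter> S' = {}" using D(5) unfolding e by blast
  have c6: "\<forall>u<narr s'. \<exists>S\<in>act s'. u \<in> S" using D(6) unfolding e by blast
  have c7: "\<forall>T. 0 \<le> yv s' T" using D(7) yge order_trans by blast
  have c8: "\<forall>T. yv s' T \<noteq> 0 \<longrightarrow> (\<exists>R\<in>act s'. T \<subseteq> R) \<and> 1 \<le> sur T"
  proof (intro allI impI)
    fix T assume T: "yv s' T \<noteq> 0"
    show "(\<exists>R\<in>act s'. T \<subseteq> R) \<and> 1 \<le> sur T"
    proof (cases "G T")
      case True
      then have "T \<in> act s" "T \<inter> fr s \<noteq> {}" unfolding G_def by auto
      moreover have "finite (T \<inter> fr s)" using D(4) \<open>T \<in> act s\<close> finite_subset by (meson finite_Int finite_lessThan)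
      ultimately have "1 \<le> sur T" using sur_active[OF I] by (simp add: Suc_le_eq card_gt_0_iff)
      then show ?thesis using \<open>T \<in> act s\<close> unfolding e by blast
    next
      case False
      then have "yv s T \<noteq> 0" using T yv' by simp
      then show ?thesis using D(8) unfolding e by blast
    qed
  qed
  have c9: "\<forall>u<narr s'. u \<notin> fr s' \<longrightarrow> matched s' u"
  proof (intro allI impI)
    fix u assume u: "u < narr s'" "u \<notin> fr s'"
    have "matched s u" using D(9) u unfolding e by blast
    then show "matched s' u" using Yge unfolding matched_def e by auto
  qed
  have fo: "\<And>S. freeok s' S = freeok s S" unfolding freeok_def e ..
  have c10: "\<forall>S\<in>act s'. freeok s' S" using D(10) unfolding e fo by blast
  have c11: "\<forall>u<narr s'. (\<Sum>T\<in>{T\<in>Pow {..<n}. u \<in> T}. yv s' T) \<le> tm s' - atime u"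
  proof (intro allI impI)
    fix u assume u: "u < narr s'"
    then obtain R where R: "R \<in> act s" "u \<in> R" using D(6) unfolding e by blast
    have "(\<Sum>T\<in>{T\<in>Pow {..<n}. u \<in> T}. (if G T then \<delta> else 0)) \<le> (\<Sum>T\<in>{R}. (if G T then \<delta> else 0))"
    proof (rule sum_le_support)
      show "\<forall>T\<in>{T \<in> Pow {..<n}. u \<in> T}. (if G T then \<delta> else 0) \<noteq> 0 \<longrightarrow> T \<in> {R}"
        using D(5) R unfolding G_def by (auto split: if_splits)
      show "\<forall>T\<in>{R}. 0 \<le> (if G T then \<delta> else 0)" using dpos by simp
    qed auto
    also have "\<dots> \<le> \<delta>" using dpos by simp
    finally have a: "(\<Sum>T\<in>{T\<in>Pow {..<n}. u \<in> T}. (if G T then \<delta> else 0)) \<le> \<delta>" .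
    have "(\<Sum>T\<in>{T\<in>Pow {..<n}. u \<in> T}. yv s' T) = (\<Sum>T\<in>{T\<in>Pow {..<n}. u \<in> T}. yv s T) + (\<Sum>T\<in>{T\<in>Pow {..<n}. u \<in> T}. (if G T then \<delta> else 0))"
      unfolding yv' by (rule sum.distrib)
    also have "\<dots> \<le> (tm s - atime u) + \<delta>" using a D(11) u unfolding e by force
    finally show "(\<Sum>T\<in>{T\<in>Pow {..<n}. u \<in> T}. yv s' T) \<le> tm s' - atime u" unfolding e \<delta>_def by simp
  qed
  have c12: "\<forall>u<narr s'. \<forall>v<narr s'. u \<noteq> v \<longrightarrow> sg u = - sg v \<longrightarrow> dual_sum n (yv s') u v \<le> ecost pos atime u v"
  proof (intro allI impI)
    fix u v assume uv: "u < narr s'" "v < narr s'" "u \<noteq> v" "sg u = - sg v"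
    show "dual_sum n (yv s') u v \<le> ecost pos atime u v"
    proof (cases "cross_edge sg s u v")
      case True
      then show ?thesis using t'(2) s' by simp
    next
      case False
      obtain Su where Su: "Su \<in> act s" "u \<in> Su" using D(6) uv unfolding e by blast
      obtain Sv where Sv: "Sv \<in> act s" "v \<in> Sv" using D(6) uv unfolding e by blast
      have "Su = Sv" using False Su Sv uv unfolding cross_edge_def e by blast
      then have same: "\<forall>S\<in>act s. (u \<in> S) = (v \<in> S)" using D(5) Su Sv by blast
      have "dual_sum n (yv s') u v = dual_sum n (yv s) u v"
        unfolding dual_sum_def
      proof (rule sum.cong)
        fix T assume "T \<in> {S. S \<subseteq> {..<n} \<and> (u \<in> S) \<noteq> (v \<in> S)}"
        then have "\<not> G T" using same unfolding G_def by blast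
        then show "yv s' T = yv s T" using yv' by simp
      qed simp
      then show ?thesis using D(12) uv unfolding e by force
    qed
  qed
  have c13: "Wsum s' = Dsum s'"
  proof -
    have ffr: "finite (fr s)" using D(3) finite_subset by blast
    have "Wsum s' = Wsum s + \<delta> * real (card (fr s))"
    proof -
      have "(\<Sum>u\<in>fr s. t' - atime u) = (\<Sum>u\<in>fr s. (tm s - atime u) + \<delta>)"
        unfolding \<delta>_def by (rule sum.cong) auto
      also have "\<dots> = (\<Sum>u\<in>fr s. tm s - atime u) + \<delta> * real (card (fr s))"
        by (simp add: sum.distrib)
      finally show ?thesis unfolding Wsum_def e by simp
    qed
    moreover have "Dsum s' = Dsum s + \<delta> * real (card (fr s))"
    proof -
      have "Dsum s' = Dsum s + (\<Sum>T\<in>Pow {..<n}. if G T then \<delta> * sur T else 0)"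
        unfolding Dsum_def yv' by (simp add: sum.distrib[symmetric] algebra_simps) (rule sum.cong, auto)
      also have "(\<Sum>T\<in>Pow {..<n}. if G T then \<delta> * sur T else 0) = (\<Sum>T\<in>{T\<in>Pow {..<n}. G T}. \<delta> * sur T)"
        by (rule sum.inter_filter[symmetric]) simp
      also have "{T\<in>Pow {..<n}. G T} = {S\<in>act s. S \<inter> fr s \<noteq> {}}"
        using D(4) D(1) unfolding G_def by fastforce
      also have "(\<Sum>T\<in>{S\<in>act s. S \<inter> fr s \<noteq> {}}. \<delta> * sur T) = (\<Sum>T\<in>{S\<in>act s. S \<inter> fr s \<noteq> {}}. \<delta> * real (card (T \<inter> fr s)))"
        using sur_active[OF I] by (intro sum.cong) auto
      also have "\<dots> = (\<Sum>T\<in>act s. \<delta> * real (card (T \<inter> fr s)))"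
        using fa by (intro sum.mono_neutral_left) auto
      also have "\<dots> = \<delta> * real (card (fr s))"
        using card_fr_split[OF I] by (simp add: sum_distrib_left)
      finally show ?thesis .
    qed
    ultimately show ?thesis using D(13) by simp
  qed
  have c14: "\<forall>S\<in>act s'. \<forall>u\<in>S. \<forall>v\<in>S. dist (pos u) (pos v) \<le> (\<Sum>T\<in>Pow S. yv s' T * gg T u v)"
  proof (intro ballI)
    fix S u v assume S: "S \<in> act s'" and uv: "u \<in> S" "v \<in> S"
    have "dist (pos u) (pos v) \<le> (\<Sum>T\<in>Pow S. yv s T * gg T u v)" using D(14) S uv unfolding e by blast
    also have "\<dots> \<le> (\<Sum>T\<in>Pow S. yv s' T * gg T u v)"
      by (rule sum_mono, rule mult_right_mono[OF yge gg_nn])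
    finally show "dist (pos u) (pos v) \<le> (\<Sum>T\<in>Pow S. yv s' T * gg T u v)" .
  qed
  show ?thesis by (rule invI[OF c1 c2 c3 c4 c5 c6 c7 c8 c9 c10 c11 c12 c13 c14])
qed

lemma tree_merge:
  fixes y :: "nat set \<Rightarrow> real"
  assumes fin: "finite Su" "finite Sv" and dj: "Su \<inter> Sv = {}"
    and ab: "a \<in> Su" "b \<in> Sv" and xz: "x \<in> Su" "z \<in> Sv"
    and ynn: "\<forall>T. 0 \<le> y T" and y0: "y {} = 0"
    and hx: "dist (pos x) (pos a) \<le> (\<Sum>T\<in>Pow Su. y T * gg T x a)"
    and hz: "dist (pos b) (pos z) \<le> (\<Sum>T\<in>Pow Sv. y T * gg T b z)"
    and hab: "dist (pos a) (pos b) \<le> (\<Sum>T\<in>{T\<in>Pow Su. a \<in> T}. y T) + (\<Sum>T\<in>{T\<in>Pow Sv. b \<in> T}. y T)"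
  shows "dist (pos x) (pos z) \<le> (\<Sum>T\<in>Pow (Su \<union> Sv). y T * gg T x z)"
proof -
  have s1: "(\<Sum>T\<in>{T\<in>Pow Su. a \<in> T}. y T) = (\<Sum>T\<in>Pow Su. if a \<in> T then y T else 0)"
    by (rule sum.inter_filter) (simp add: fin)
  have s2: "(\<Sum>T\<in>{T\<in>Pow Sv. b \<in> T}. y T) = (\<Sum>T\<in>Pow Sv. if b \<in> T then y T else 0)"
    by (rule sum.inter_filter) (simp add: fin)
  have p1: "(\<Sum>T\<in>Pow Su. y T * gg T x a) + (\<Sum>T\<in>Pow Su. if a \<in> T then y T else 0) \<le> (\<Sum>T\<in>Pow Su. y T * gg T x z)"
  proof -
    have "(\<Sum>T\<in>Pow Su. y T * gg T x a) + (\<Sum>T\<in>Pow Su. if a \<in> T then y T else 0)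
        = (\<Sum>T\<in>Pow Su. y T * (gg T x a + (if a \<in> T then 1 else 0)))"
      unfolding sum.distrib[symmetric] by (rule sum.cong) (auto simp: algebra_simps)
    also have "\<dots> \<le> (\<Sum>T\<in>Pow Su. y T * gg T x z)"
    proof (rule sum_mono)
      fix T assume "T \<in> Pow Su"
      then have "z \<notin> T" using xz dj by auto
      then have "gg T x a + (if a \<in> T then 1 else 0) \<le> gg T x z" unfolding gg_def by auto
      then show "y T * (gg T x a + (if a \<in> T then 1 else 0)) \<le> y T * gg T x z"
        using ynn by (intro mult_left_mono) auto
    qed
    finally show ?thesis .
  qed
  have p2: "(\<Sum>T\<in>Pow Sv. y T * gg T b z) + (\<Sum>T\<in>Pow Sv. if b \<in> T then y T else 0) \<le> (\<Sum>T\<in>Pow Sv. y T * gg T x z)"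
  proof -
    have "(\<Sum>T\<in>Pow Sv. y T * gg T b z) + (\<Sum>T\<in>Pow Sv. if b \<in> T then y T else 0)
        = (\<Sum>T\<in>Pow Sv. y T * (gg T b z + (if b \<in> T then 1 else 0)))"
      unfolding sum.distrib[symmetric] by (rule sum.cong) (auto simp: algebra_simps)
    also have "\<dots> \<le> (\<Sum>T\<in>Pow Sv. y T * gg T x z)"
    proof (rule sum_mono)
      fix T assume "T \<in> Pow Sv"
      then have "x \<notin> T" using xz dj by auto
      then have "gg T b z + (if b \<in> T then 1 else 0) \<le> gg T x z" unfolding gg_def by auto
      then show "y T * (gg T b z + (if b \<in> T then 1 else 0)) \<le> y T * gg T x z"
        using ynn by (intro mult_left_mono) auto
    qed
    finally show ?thesis .
  qed
  have fP: "finite (Pow Su)" "finite (Pow Sv)" using fin by auto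
  have int: "Pow Su \<inter> Pow Sv = {{}}" using dj by auto
  have "(\<Sum>T\<in>Pow Su \<union> Pow Sv. y T * gg T x z) = (\<Sum>T\<in>Pow Su. y T * gg T x z) + (\<Sum>T\<in>Pow Sv. y T * gg T x z)"
    using sum_Un[OF fP, of "\<lambda>T. y T * gg T x z"] int y0 by simp
  moreover have "(\<Sum>T\<in>Pow Su \<union> Pow Sv. y T * gg T x z) \<le> (\<Sum>T\<in>Pow (Su \<union> Sv). y T * gg T x z)"
    by (rule sum_mono2) (use fin ynn gg_nn in auto)
  moreover have "dist (pos x) (pos z) \<le> dist (pos x) (pos a) + dist (pos a) (pos b) + dist (pos b) (pos z)"
  proof -
    have "dist (pos x) (pos z) \<le> dist (pos x) (pos a) + dist (pos a) (pos z)" by (rule dist_triangle)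
    moreover have "dist (pos a) (pos z) \<le> dist (pos a) (pos b) + dist (pos b) (pos z)" by (rule dist_triangle)
    ultimately show ?thesis by linarith
  qed
  ultimately show ?thesis using hx hz hab p1 p2 s1 s2 by linarith
qed

lemma sur_empty: "sur {} = 0" unfolding sur_def by simp

lemma merge_inv:
  assumes I: "inv s" and M: "gd_merge n pos atime sg s s'"
  shows "inv s'"
proof -
  note D = invD[OF I]
  obtain a b Su Sv where Su: "Su \<in> act s" and Sv: "Sv \<in> act s" and neq: "Su \<noteq> Sv"
    and ab: "a \<in> Su" "b \<in> Sv" and tight: "tight_edge n pos atime sg s a b"
    and e0: "tm s' = tm s" "narr s' = narr s" "yv s' = yv s"
    and eact: "act s' = insert (Su \<union> Sv) (act s - {Su, Sv})"
    and frsub: "fr s' \<subseteq> fr s" and Rsub: "fr s - fr s' \<subseteq> Su \<union> Sv"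
    and Rm: "\<forall>w \<in> fr s - fr s'. mate s' w \<in> fr s - fr s' \<and> mate s' w \<noteq> w \<and>
            mate s' (mate s' w) = w \<and> sg (mate s' w) = - sg w \<and> mtm s' w = tm s"
    and nR: "\<forall>w. w \<notin> fr s - fr s' \<longrightarrow> mate s' w = mate s w \<and> mtm s' w = mtm s w"
    and nofree: "\<not> (\<exists>x\<in>fr s' \<inter> (Su \<union> Sv). \<exists>y\<in>fr s' \<inter> (Su \<union> Sv). x \<noteq> y \<and> sg x = - sg y)"
    using M unfolding gd_merge_def by (elim exE conjE) (rule that; assumption)
  define S0 where "S0 = Su \<union> Sv"
  define R where "R = fr s - fr s'"
  have dj: "Su \<inter> Sv = {}" using D(5)[OF Su Sv neq] .
  have finS: "finite Su" "finite Sv" using D(4)[OF Su] D(4)[OF Sv] finite_subset by (meson finite_lessThan)+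
  have Y: "Ysum s' = Ysum s" "Dsum s' = Dsum s" unfolding Ysum_def Dsum_def e0 by auto
  have y0: "yv s {} = 0" using D(8)[of "{}"] sur_empty by fastforce
  have inact: "\<And>S. S \<in> act s' \<longleftrightarrow> S = S0 \<or> (S \<in> act s \<and> S \<noteq> Su \<and> S \<noteq> Sv)"
    unfolding eact S0_def by auto
  have S0act: "S0 \<in> act s'" unfolding inact by simp
  have oldact: "\<And>Q. Q \<in> act s \<Longrightarrow> \<not> (Q = Su \<or> Q = Sv) \<Longrightarrow> Q \<in> act s'" unfolding inact by blast
  have S0sub: "S0 \<subseteq> {..<narr s}" using D(4)[OF Su] D(4)[OF Sv] unfolding S0_def by blast
  have key: "\<And>x z. x \<in> Su \<Longrightarrow> z \<in> Sv \<Longrightarrow> dist (pos x) (pos z) \<le> (\<Sum>T\<in>Pow S0. yv s T * gg T x z)"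
  proof -
    fix x z assume xz: "x \<in> Su" "z \<in> Sv"
    have te: "dual_sum n (yv s) a b = ecost pos atime a b" using tight unfolding tight_edge_def by blast
    have "dist (pos a) (pos b) \<le> ecost pos atime a b" unfolding ecost_def by simp
    also have "\<dots> = dual_sum n (yv s) a b" using te by simp
    also have "\<dots> \<le> (\<Sum>T\<in>{T\<in>Pow Su. a \<in> T} \<union> {T\<in>Pow Sv. b \<in> T}. yv s T)"
      unfolding dual_sum_def
    proof (rule sum_le_support)
      show "finite {S. S \<subseteq> {..<n} \<and> (a \<in> S) \<noteq> (b \<in> S)}" by simp
      show "finite ({T \<in> Pow Su. a \<in> T} \<union> {T \<in> Pow Sv. b \<in> T})" using finS by simp
      show "\<forall>T\<in>({T \<in> Pow Su. a \<in> T} \<union> {T \<in> Pow Sv. b \<in> T}). 0 \<le> yv s T" using D(7) by blast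
      show "\<forall>T\<in>{S. S \<subseteq> {..<n} \<and> (a \<in> S) \<noteq> (b \<in> S)}. yv s T \<noteq> 0 \<longrightarrow> T \<in> {T \<in> Pow Su. a \<in> T} \<union> {T \<in> Pow Sv. b \<in> T}"
      proof (intro ballI impI)
        fix T assume T: "T \<in> {S. S \<subseteq> {..<n} \<and> (a \<in> S) \<noteq> (b \<in> S)}" and y: "yv s T \<noteq> 0"
        obtain Q where Q: "Q \<in> act s" "T \<subseteq> Q" using D(8)[OF y] by blast
        have "(a \<in> T \<and> b \<notin> T) \<or> (b \<in> T \<and> a \<notin> T)" using T by auto
        then show "T \<in> {T \<in> Pow Su. a \<in> T} \<union> {T \<in> Pow Sv. b \<in> T}"
        proof
          assume h: "a \<in> T \<and> b \<notin> T"
          then have "a \<in> Q" using Q by auto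
          then have "Q = Su" using D(5)[OF Q(1) Su] ab by blast
          then show ?thesis using Q h by auto
        next
          assume h: "b \<in> T \<and> a \<notin> T"
          then have "b \<in> Q" using Q by auto
          then have "Q = Sv" using D(5)[OF Q(1) Sv] ab by blast
          then show ?thesis using Q h by auto
        qed
      qed
    qed
    also have "\<dots> = (\<Sum>T\<in>{T\<in>Pow Su. a \<in> T}. yv s T) + (\<Sum>T\<in>{T\<in>Pow Sv. b \<in> T}. yv s T)"
      by (rule sum.union_disjoint) (use finS dj ab in auto)
    finally have hab: "dist (pos a) (pos b) \<le> (\<Sum>T\<in>{T\<in>Pow Su. a \<in> T}. yv s T) + (\<Sum>T\<in>{T\<in>Pow Sv. b \<in> T}. yv s T)" .
    show "dist (pos x) (pos z) \<le> (\<Sum>T\<in>Pow S0. yv s T * gg T x z)"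
      unfolding S0_def
      by (rule tree_merge[where y="yv s", OF finS dj ab xz]) (use D(7) y0 hab D(14)[OF Su xz(1) ab(1)] D(14)[OF Sv ab(2) xz(2)] in auto)
  qed
  have mono0: "\<And>Q x z. Q \<subseteq> S0 \<Longrightarrow> (\<Sum>T\<in>Pow Q. yv s T * gg T x z) \<le> (\<Sum>T\<in>Pow S0. yv s T * gg T x z)"
  proof -
    fix Q x z assume "Q \<subseteq> S0"
    then show "(\<Sum>T\<in>Pow Q. yv s T * gg T x z) \<le> (\<Sum>T\<in>Pow S0. yv s T * gg T x z)"
      by (intro sum_mono2) (use finS D(7) gg_nn in \<open>auto simp: S0_def\<close>)
  qed
  have treeS0: "\<And>x z. x \<in> S0 \<Longrightarrow> z \<in> S0 \<Longrightarrow> dist (pos x) (pos z) \<le> (\<Sum>T\<in>Pow S0. yv s T * gg T x z)"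
  proof -
    fix x z assume xz: "x \<in> S0" "z \<in> S0"
    have ggs: "\<And>T. gg T x z = gg T z x" unfolding gg_def by auto
    consider "x \<in> Su" "z \<in> Su" | "x \<in> Sv" "z \<in> Sv" | "x \<in> Su" "z \<in> Sv" | "x \<in> Sv" "z \<in> Su"
      using xz unfolding S0_def by blast
    then show "dist (pos x) (pos z) \<le> (\<Sum>T\<in>Pow S0. yv s T * gg T x z)"
    proof cases
      case 1 then show ?thesis using D(14)[OF Su] mono0[of Su x z] unfolding S0_def by force
    next
      case 2 then show ?thesis using D(14)[OF Sv] mono0[of Sv x z] unfolding S0_def by force
    next
      case 3 then show ?thesis using key by blast
    next
      case 4 then show ?thesis using key[of z x] ggs by (simp add: dist_commute)
    qed
  qed
  have Ybound: "\<And>x z. x \<in> S0 \<Longrightarrow> z \<in> S0 \<Longrightarrow> dist (pos x) (pos z) \<le> 2 * Ysum s"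
  proof -
    fix x z assume xz: "x \<in> S0" "z \<in> S0"
    have "(\<Sum>T\<in>Pow S0. yv s T * gg T x z) \<le> (\<Sum>T\<in>Pow S0. yv s T * 2)"
      by (rule sum_mono, rule mult_left_mono) (use D(7) in \<open>auto simp: gg_def\<close>)
    also have "\<dots> \<le> (\<Sum>T\<in>Pow {..<n}. yv s T * 2)"
      by (rule sum_mono2) (use S0sub D(1) D(7) in auto)
    also have "\<dots> = 2 * Ysum s" unfolding Ysum_def by (simp add: sum_distrib_left algebra_simps)
    finally show "dist (pos x) (pos z) \<le> 2 * Ysum s" using treeS0[OF xz] by linarith
  qed
  have c1: "narr s' \<le> n" using D(1) e0 by simp
  have c2: "\<forall>u<narr s'. atime u \<le> tm s'" using D(2) unfolding e0 by blast
  have c3: "fr s' \<subseteq> {..<narr s'}" using D(3) frsub unfolding e0 by blast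
  have c4: "\<forall>S\<in>act s'. S \<noteq> {} \<and> S \<subseteq> {..<narr s'}"
  proof
    fix S assume S: "S \<in> act s'"
    then have "S = S0 \<or> S \<in> act s" unfolding inact by blast
    then show "S \<noteq> {} \<and> S \<subseteq> {..<narr s'}"
    proof
      assume "S = S0" then show ?thesis using S0sub ab e0 unfolding S0_def by auto
    next
      assume "S \<in> act s" then show ?thesis using D(4) e0 by simp
    qed
  qed
  have dd: "\<And>Q. Q \<in> act s \<Longrightarrow> Q \<noteq> Su \<Longrightarrow> Q \<noteq> Sv \<Longrightarrow> S0 \<inter> Q = {}"
  proof -
    fix Q assume Q: "Q \<in> act s" "Q \<noteq> Su" "Q \<noteq> Sv"
    have "Su \<inter> Q = {}" using D(5)[OF Su Q(1)] Q(2) by simp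
    moreover have "Sv \<inter> Q = {}" using D(5)[OF Sv Q(1)] Q(3) by simp
    ultimately show "S0 \<inter> Q = {}" unfolding S0_def by blast
  qed
  have c5: "\<forall>S\<in>act s'. \<forall>S'\<in>act s'. S \<noteq> S' \<longrightarrow> S \<inter> S' = {}"
  proof (intro ballI impI)
    fix S S' assume S: "S \<in> act s'" and S': "S' \<in> act s'" and ne: "S \<noteq> S'"
    have h1: "S = S0 \<or> (S \<in> act s \<and> S \<noteq> Su \<and> S \<noteq> Sv)" using S unfolding inact .
    have h2: "S' = S0 \<or> (S' \<in> act s \<and> S' \<noteq> Su \<and> S' \<noteq> Sv)" using S' unfolding inact .
    show "S \<inter> S' = {}"
    proof (cases "S = S0")
      case True
      then have "S' \<in> act s \<and> S' \<noteq> Su \<and> S' \<noteq> Sv" using h2 ne by blast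
      then show ?thesis using dd True by blast
    next
      case False
      then have hS: "S \<in> act s" "S \<noteq> Su" "S \<noteq> Sv" using h1 by auto
      show ?thesis
      proof (cases "S' = S0")
        case True then show ?thesis using dd[OF hS] by blast
      next
        case False
        then have "S' \<in> act s" using h2 by blast
        then show ?thesis using D(5)[OF hS(1)] ne by blast
      qed
    qed
  qed
  have c6: "\<forall>u<narr s'. \<exists>S\<in>act s'. u \<in> S"
  proof (intro allI impI)
    fix u assume "u < narr s'"
    then have "u < narr s" using e0 by simp
    then obtain Q where Q: "Q \<in> act s" "u \<in> Q" using D(6) by blast
    show "\<exists>S\<in>act s'. u \<in> S"
    proof (cases "Q = Su \<or> Q = Sv")
      case True then have "Q \<subseteq> S0" unfolding S0_def by blast
      then show ?thesis using Q S0act by blast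
    next
      case False then show ?thesis using Q oldact by blast
    qed
  qed
  have c7: "\<forall>T. 0 \<le> yv s' T" using D(7) e0 by simp
  have c8: "\<forall>T. yv s' T \<noteq> 0 \<longrightarrow> (\<exists>R\<in>act s'. T \<subseteq> R) \<and> 1 \<le> sur T"
  proof (intro allI impI)
    fix T assume "yv s' T \<noteq> 0"
    then have y: "yv s T \<noteq> 0" using e0 by simp
    obtain Q where Q: "Q \<in> act s" "T \<subseteq> Q" using D(8)[OF y] by blast
    have "\<exists>R\<in>act s'. T \<subseteq> R"
    proof (cases "Q = Su \<or> Q = Sv")
      case True then have "Q \<subseteq> S0" unfolding S0_def by blast
      then show ?thesis using Q S0act by blast
    next
      case False then show ?thesis using Q oldact by blast
    qed
    then show "(\<exists>R\<in>act s'. T \<subseteq> R) \<and> 1 \<le> sur T" using D(8)[OF y] by blast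
  qed
  have c9: "\<forall>u<narr s'. u \<notin> fr s' \<longrightarrow> matched s' u"
  proof (intro allI impI)
    fix w assume w: "w < narr s'" "w \<notin> fr s'"
    show "matched s' w"
    proof (cases "w \<in> R")
      case True
      have r: "mate s' w \<in> R" "mate s' w \<noteq> w" "mate s' (mate s' w) = w" "sg (mate s' w) = - sg w" "mtm s' w = tm s"
        using Rm True unfolding R_def by auto
      have r2: "mtm s' (mate s' w) = tm s" using Rm r(1) unfolding R_def by auto
      have inS0: "w \<in> S0" "mate s' w \<in> S0" using Rsub True r(1) unfolding R_def S0_def by auto
      have "mate s' w < narr s'" using r(1) D(3) e0 unfolding R_def by auto
      moreover have "mate s' w \<notin> fr s'" using r(1) unfolding R_def by auto
      moreover have "atime w \<le> mtm s' w" using D(2) w r(5) e0 by simp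
      moreover have "dist (pos w) (pos (mate s' w)) \<le> 2 * Ysum s'" using Ybound[OF inS0] Y by simp
      moreover have "\<exists>S\<in>act s'. w \<in> S \<and> mate s' w \<in> S" using inS0 S0act by blast
      ultimately show ?thesis using r r2 unfolding matched_def by simp
    next
      case False
      have wo: "w < narr s" "w \<notin> fr s" using w False e0 unfolding R_def by auto
      have m: "matched s w" using D(9) wo by blast
      have mw: "mate s' w = mate s w" "mtm s' w = mtm s w" using nR False unfolding R_def by auto
      have mnf: "mate s w \<notin> fr s" using m unfolding matched_def by blast
      then have mw2: "mate s' (mate s w) = mate s (mate s w)" "mtm s' (mate s w) = mtm s (mate s w)"
        using nR unfolding R_def by auto
      obtain Q where Q: "Q \<in> act s" "w \<in> Q" "mate s w \<in> Q" using m unfolding matched_def by blast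
      have "\<exists>S\<in>act s'. w \<in> S \<and> mate s w \<in> S"
      proof (cases "Q = Su \<or> Q = Sv")
        case True then have "Q \<subseteq> S0" unfolding S0_def by blast
      then show ?thesis using Q S0act by blast
      next
        case False then show ?thesis using Q oldact by blast
      qed
      then have ex: "\<exists>S\<in>act s'. w \<in> S \<and> mate s w \<in> S" .
      have mm: "mate s w < narr s" "mate s w \<noteq> w" "mate s (mate s w) = w" "sg (mate s w) = - sg w"
        "mtm s (mate s w) = mtm s w" "atime w \<le> mtm s w" "dist (pos w) (pos (mate s w)) \<le> 2 * Ysum s"
        using m unfolding matched_def by blast+
      have "mate s w \<notin> fr s'" using mnf frsub by blast
      then show ?thesis unfolding matched_def mw mw2 e0 Y using mm ex by simp
    qed
  qed
  have c10: "\<forall>S\<in>act s'. freeok s' S"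
  proof
    fix S assume S: "S \<in> act s'"
    show "freeok s' S"
    proof (cases "S = S0")
      case True
      have nf: "\<And>x y. x \<in> S0 \<inter> fr s' \<Longrightarrow> y \<in> S0 \<inter> fr s' \<Longrightarrow> x \<noteq> y \<Longrightarrow> sg x \<noteq> - sg y"
        using nofree unfolding S0_def by blast
      have lt: "\<And>x. x \<in> S0 \<inter> fr s' \<Longrightarrow> x < n" using S0sub D(1) by auto
      show ?thesis
      proof (cases bip)
        case b: True
        have "\<forall>x\<in>S0 \<inter> fr s'. \<forall>y\<in>S0 \<inter> fr s'. sg x = sg y"
        proof (intro ballI)
          fix x y assume xy: "x \<in> S0 \<inter> fr s'" "y \<in> S0 \<inter> fr s'"
          have "sg x = 1 \<or> sg x = -1" "sg y = 1 \<or> sg y = -1" using sgv[OF lt[OF xy(1)]] sgv[OF lt[OF xy(2)]] b by auto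
          then show "sg x = sg y" using nf[OF xy] by (cases "x = y") auto
        qed
        then show ?thesis using True b unfolding freeok_def by (simp only: if_True)
      next
        case b: False
        have fin: "finite (S0 \<inter> fr s')" using S0sub finite_subset by blast
        have "\<forall>x\<in>S0 \<inter> fr s'. \<forall>y\<in>S0 \<inter> fr s'. x = y"
        proof (intro ballI)
          fix x y assume xy: "x \<in> S0 \<inter> fr s'" "y \<in> S0 \<inter> fr s'"
          have "sg x = 0" "sg y = 0" using sgv[OF lt[OF xy(1)]] sgv[OF lt[OF xy(2)]] b by auto
          then show "x = y" using nf[OF xy] by auto
        qed
        then have "card (S0 \<inter> fr s') \<le> 1" using card_le_Suc0_iff_eq[OF fin] by simp
        then show ?thesis using True b unfolding freeok_def by (simp only: if_False)
      qed
    next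
      case False
      then have S1: "S \<in> act s" "S \<noteq> Su" "S \<noteq> Sv" using S unfolding inact by auto
      have "S \<inter> S0 = {}" using D(5) S1 Su Sv unfolding S0_def by blast
      then have "S \<inter> fr s' = S \<inter> fr s" using frsub Rsub unfolding S0_def by blast
      then have "freeok s' S = freeok s S" unfolding freeok_def by (simp only:)
      then show ?thesis using D(10) S1(1) by blast
    qed
  qed
  have c11: "\<forall>u<narr s'. (\<Sum>T\<in>{T\<in>Pow {..<n}. u \<in> T}. yv s' T) \<le> tm s' - atime u"
    using D(11) unfolding e0 by blast
  have c12: "\<forall>u<narr s'. \<forall>v<narr s'. u \<noteq> v \<longrightarrow> sg u = - sg v \<longrightarrow> dual_sum n (yv s') u v \<le> ecost pos atime u v"
    using D(12) unfolding e0 by blast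
  have c13: "Wsum s' = Dsum s'"
  proof -
    define N where "N = {..<narr s}"
    have ffr: "finite (fr s)" using D(3) finite_subset by blast
    have fN: "finite N" unfolding N_def by simp
    have Rsubfr: "R \<subseteq> fr s" unfolding R_def by blast
    have split1: "N - fr s' = (N - fr s) \<union> R" "(N - fr s) \<inter> R = {}"
      using D(3) frsub unfolding N_def R_def by auto
    have split2: "fr s = fr s' \<union> R" "fr s' \<inter> R = {}" using frsub unfolding R_def by auto
    have fR: "finite R" using ffr Rsubfr finite_subset by blast
    have ffr': "finite (fr s')" using ffr frsub finite_subset by blast
    have a1: "(\<Sum>u\<in>N - fr s. mtm s' u - atime u) = (\<Sum>u\<in>N - fr s. mtm s u - atime u)"
      using nR unfolding R_def by (intro sum.cong) auto
    have a2: "(\<Sum>u\<in>R. mtm s' u - atime u) = (\<Sum>u\<in>R. tm s - atime u)"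
      using Rm unfolding R_def by (intro sum.cong) auto
    have "Wsum s' = (\<Sum>u\<in>N - fr s'. mtm s' u - atime u) + (\<Sum>u\<in>fr s'. tm s - atime u)"
      unfolding Wsum_def e0 N_def ..
    also have "\<dots> = (\<Sum>u\<in>N - fr s. mtm s u - atime u) + (\<Sum>u\<in>R. tm s - atime u) + (\<Sum>u\<in>fr s'. tm s - atime u)"
    proof -
      have "(\<Sum>u\<in>(N - fr s) \<union> R. mtm s' u - atime u) = (\<Sum>u\<in>N - fr s. mtm s' u - atime u) + (\<Sum>u\<in>R. mtm s' u - atime u)"
        by (rule sum.union_disjoint) (use fN fR split1(2) in auto)
      then show ?thesis unfolding split1(1) using a1 a2 by simp
    qed
    also have "\<dots> = (\<Sum>u\<in>N - fr s. mtm s u - atime u) + (\<Sum>u\<in>fr s. tm s - atime u)"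
      using sum.union_disjoint[OF ffr' fR split2(2), of "\<lambda>u. tm s - atime u"] split2(1) by simp
    also have "\<dots> = Wsum s" unfolding Wsum_def N_def ..
    finally show ?thesis using D(13) Y by simp
  qed
  have c14: "\<forall>S\<in>act s'. \<forall>u\<in>S. \<forall>v\<in>S. dist (pos u) (pos v) \<le> (\<Sum>T\<in>Pow S. yv s' T * gg T u v)"
  proof (intro ballI)
    fix S u v assume S: "S \<in> act s'" and uv: "u \<in> S" "v \<in> S"
    show "dist (pos u) (pos v) \<le> (\<Sum>T\<in>Pow S. yv s' T * gg T u v)"
    proof (cases "S = S0")
      case True then show ?thesis using treeS0 uv e0 by simp
    next
      case False
      then have "S \<in> act s" using S unfolding inact by auto
      then show ?thesis using D(14) uv e0 by simp
    qed
  qed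
  show ?thesis by (rule invI[OF c1 c2 c3 c4 c5 c6 c7 c8 c9 c10 c11 c12 c13 c14])
qed

lemma step_inv: "inv s \<Longrightarrow> gd_step n pos atime sg s s' \<Longrightarrow> inv s'"
  unfolding gd_step_def using arrive_inv merge_inv advance_inv by blast

lemma reach_inv:
  assumes "(gd_step n pos atime sg)\<^sup>*\<^sup>* gd_init s"
  shows "inv s"
  using assms
proof (induction rule: rtranclp_induct)
  case base then show ?case by (rule inv_init)
next
  case (step y z) then show ?case using step_inv by blast
qed

lemma final_bound:
  assumes I: "inv s" and nn: "narr s = n" and f0: "fr s = {}" and nm: "n = 2 * m"
  shows "matching_cost n pos atime (mate s) (mtm s) \<le> (2 * real m + 1) * Opt n pos atime sg"
proof -
  note D = invD[OF I]
  have mt: "\<And>u. u < n \<Longrightarrow> matched s u" using D(9) nn f0 by simp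
  have vs: "valid_solution n atime sg (mate s) (mtm s)"
    unfolding valid_solution_def
  proof (intro allI impI)
    fix u assume u: "u < n"
    show "mate s u < n \<and> mate s u \<noteq> u \<and> mate s (mate s u) = u \<and> sg (mate s u) = - sg u \<and>
            mtm s (mate s u) = mtm s u \<and> atime u \<le> mtm s u"
      using mt[OF u] nn unfolding matched_def by simp
  qed
  have cl: "\<forall>u\<in>{..<n}. mate s u \<in> {..<n} \<and> mate s u \<noteq> u \<and> mate s (mate s u) = u"
    using vs unfolding valid_solution_def by auto
  define P where "P = {u. u < n \<and> u < mate s u}"
  have Peq: "{u\<in>{..<n}. u < mate s u} = P" unfolding P_def by auto
  have "(\<Sum>u\<in>{..<n}. (1::real)) = 2 * (\<Sum>u\<in>{u\<in>{..<n}. u < mate s u}. (1::real))"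
    by (rule invol_sum2[OF _ cl]) simp_all
  then have cP: "real n = 2 * real (card P)" using Peq by simp
  have Yge: "Ysum s \<le> Dsum s"
    unfolding Ysum_def Dsum_def
  proof (rule sum_mono)
    fix T assume "T \<in> Pow {..<n}"
    show "yv s T \<le> yv s T * sur T"
    proof (cases "yv s T = 0")
      case True then show ?thesis by simp
    next
      case False
      then have "1 \<le> sur T" using D(8) by blast
      then show ?thesis using D(7)[of T] by (metis mult_left_mono mult.right_neutral)
    qed
  qed
  have conn: "(\<Sum>u\<in>P. dist (pos u) (pos (mate s u))) \<le> real m * (2 * Ysum s)"
  proof -
    have "(\<Sum>u\<in>P. dist (pos u) (pos (mate s u))) \<le> (\<Sum>u\<in>P. 2 * Ysum s)"
    proof (rule sum_mono)
      fix u assume "u \<in> P"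
      then have "u < n" unfolding P_def by simp
      then show "dist (pos u) (pos (mate s u)) \<le> 2 * Ysum s" using mt unfolding matched_def by blast
    qed
    also have "\<dots> = real (card P) * (2 * Ysum s)" by simp
    also have "real (card P) = real m" using cP nm by simp
    finally show ?thesis .
  qed
  have W: "(\<Sum>u<n. mtm s u - atime u) = Dsum s"
    using D(13) unfolding Wsum_def nn f0 by simp
  have cost: "matching_cost n pos atime (mate s) (mtm s) \<le> real m * (2 * Dsum s) + Dsum s"
  proof -
    have "matching_cost n pos atime (mate s) (mtm s) = (\<Sum>u\<in>P. dist (pos u) (pos (mate s u))) + Dsum s"
      unfolding matching_cost_def P_def using W by simp
    also have "\<dots> \<le> real m * (2 * Ysum s) + Dsum s" using conn by simp
    also have "\<dots> \<le> real m * (2 * Dsum s) + Dsum s" using Yge by (simp add: mult_left_mono)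
    finally show ?thesis .
  qed
  have feas: "\<forall>u<n. \<forall>v<n. u \<noteq> v \<longrightarrow> sg u = - sg v \<longrightarrow> dual_sum n (yv s) u v \<le> ecost pos atime u v"
    using D(12) nn by simp
  have DO: "Dsum s \<le> Opt n pos atime sg"
    unfolding Opt_def
  proof (rule cInf_greatest)
    show "{matching_cost n pos atime mate mt |mate mt. valid_solution n atime sg mate mt} \<noteq> {}"
      using vs by blast
    fix x assume "x \<in> {matching_cost n pos atime mate mt |mate mt. valid_solution n atime sg mate mt}"
    then obtain mt' mtt where "x = matching_cost n pos atime mt' mtt" "valid_solution n atime sg mt' mtt" by blast
    then show "Dsum s \<le> x" using weak_dual[of mt' mtt "yv s"] D(7) feas unfolding Dsum_def by blast
  qed
  have "real m * (2 * Dsum s) + Dsum s = (2 * real m + 1) * Dsum s" by (simp add: algebra_simps)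
  also have "\<dots> \<le> (2 * real m + 1) * Opt n pos atime sg" using DO by (intro mult_left_mono) auto
  finally show ?thesis using cost by linarith
qed

end

theorem theorem1:
  fixes m :: nat and pos :: "nat \<Rightarrow> 'a::metric_space"
    and atime :: "nat \<Rightarrow> real" and sg :: "nat \<Rightarrow> int" and s :: gd_state
  assumes "mpmd_instance m atime sg \<or> mbpmd_instance m atime sg"
    and "gd_final_state (2*m) pos atime sg s"
  shows "matching_cost (2*m) pos atime (mate s) (mtm s) \<le> (2 * real m + 1) * Opt (2*m) pos atime sg"
proof -
  have fs: "(gd_step (2*m) pos atime sg)\<^sup>*\<^sup>* gd_init s" "narr s = 2*m" "fr s = {}"
    using assms(2) unfolding gd_final_state_def by auto
  from assms(1) show ?thesis
  proof
    assume h: "mpmd_instance m atime sg"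
    interpret g: gdl "2*m" pos atime sg False
      by unfold_locales (use h in \<open>auto simp: mpmd_instance_def\<close>)
    show ?thesis by (rule g.final_bound[OF g.reach_inv[OF fs(1)] fs(2) fs(3) refl])
  next
    assume h: "mbpmd_instance m atime sg"
    interpret g: gdl "2*m" pos atime sg True
      by unfold_locales (use h in \<open>auto simp: mbpmd_instance_def\<close>)
    show ?thesis by (rule g.final_bound[OF g.reach_inv[OF fs(1)] fs(2) fs(3) refl])
  qed
qed

end
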